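(* Let $\mathcal{H}$ be a finite-dimensional Hilbert space and let $|\psi_\pm\rangle,|\varphi_\pm\rangle\in\mathcal{H}$ be unit vectors with $t:=|\langle\varphi_+|\varphi_-\rangle|\le s:=|\langle\psi_+|\psi_-\rangle|$. For a quantum operation $\mathcal{E}$ on $\mathcal{H}$ (completely positive, trace-non-increasing) with $p_\pm:=\mathrm{Tr}\,\mathcal{E}(|\psi_\pm\rangle\langle\psi_\pm|)>0$, set $\rho_\pm=\mathcal{E}(|\psi_\pm\rangle\langle\psi_\pm|)/p_\pm$ and define $p(\mathcal{E})=\min\{p_+,p_-\}$ and $F(\mathcal{E})=\min\{F(|\varphi_+\rangle\langle\varphi_+|,\rho_+),F(|\varphi_-\rangle\langle\varphi_-|,\rho_-)\}$, where $F(|\varphi\rangle\langle\varphi|,\rho)=\sqrt{\langle\varphi|\rho|\varphi\rangle}$. Let $p_0=(1-s)/(1-t)$. Then for every $p\in[p_0,1]$ with $p>0$, the maximum of $F(\mathcal{E})$ over all quantum operations $\mathcal{E}$ with $p(\mathcal{E})\ge p$ equals $$F(p)=\cos\left[\frac{\arccos t-\arccos\left(1-\frac{1-s}{p}\right)}{2}\right].$$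
   Context: This describes the optimal (upper) frontier of the set of achievable pairs (minimum success probability, minimum fidelity) for approximately transforming the pair $|\psi_\pm\rangle$ into the target pair $|\varphi_\pm\rangle$; the frontier runs from $(1,f_0)$ to $(p_0,1)$ with $f_0=\cos[(\arccos t-\arccos s)/2]$. Unitary operations are allowed as (part of) quantum operations. *)

theory Defs
  imports "HOL-Analysis.Analysis"
begin

definition cinner :: "complex^'n \<Rightarrow> complex^'n \<Rightarrow> complex" where
  "cinner v w = (\<Sum>i\<in>UNIV. cnj (v $ i) * w $ i)"

definition adj :: "complex^'n^'n \<Rightarrow> complex^'n^'n" where
  "adj A = (\<chi> i j. cnj (A $ j $ i))"

definition proj :: "complex^'n \<Rightarrow> complex^'n^'n" where
  "proj v = (\<chi> i j. v $ i * cnj (v $ j))"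

definition psd :: "complex^'n^'n \<Rightarrow> bool" where
  "psd A \<longleftrightarrow> (\<forall>v. Im (cinner v (A *v v)) = 0 \<and> 0 \<le> Re (cinner v (A *v v)))"

text \<open>Completely positive maps on a finite-dimensional space, in operator-sum (Kraus) form.\<close>
definition kraus_map :: "(complex^'n^'n) list \<Rightarrow> complex^'n^'n \<Rightarrow> complex^'n^'n" where
  "kraus_map Ks \<rho> = (\<Sum>K\<leftarrow>Ks. K ** \<rho> ** adj K)"

definition quantum_operation :: "(complex^'n^'n \<Rightarrow> complex^'n^'n) \<Rightarrow> bool" where
  "quantum_operation E \<longleftrightarrow> (\<exists>Ks. E = kraus_map Ks) \<and>
     (\<forall>\<rho>. psd \<rho> \<longrightarrow> Re (trace (E \<rho>)) \<le> Re (trace \<rho>))"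

definition succ_prob :: "(complex^'n^'n \<Rightarrow> complex^'n^'n) \<Rightarrow> complex^'n \<Rightarrow> real" where
  "succ_prob E v = Re (trace (E (proj v)))"

definition pure_fid :: "complex^'n \<Rightarrow> complex^'n^'n \<Rightarrow> real" where
  "pure_fid phi \<rho> = sqrt (Re (cinner phi (\<rho> *v phi)))"

definition out_state :: "(complex^'n^'n \<Rightarrow> complex^'n^'n) \<Rightarrow> complex^'n \<Rightarrow> complex^'n^'n" where
  "out_state E v = (1 / succ_prob E v) *\<^sub>R E (proj v)"

definition pE :: "(complex^'n^'n \<Rightarrow> complex^'n^'n) \<Rightarrow> complex^'n \<Rightarrow> complex^'n \<Rightarrow> real" where
  "pE E psip psim = min (succ_prob E psip) (succ_prob E psim)"

definition FE :: "(complex^'n^'n \<Rightarrow> complex^'n^'n) \<Rightarrow> complex^'n \<Rightarrow> complex^'n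
                  \<Rightarrow> complex^'n \<Rightarrow> complex^'n \<Rightarrow> real" where
  "FE E psip psim phip phim =
     min (pure_fid phip (out_state E psip)) (pure_fid phim (out_state E psim))"

end

theory Submission
  imports Defs
begin


definition ip :: "'a set \<Rightarrow> ('a \<Rightarrow> complex) \<Rightarrow> ('a \<Rightarrow> complex) \<Rightarrow> complex" where
  "ip S f g = (\<Sum>k\<in>S. cnj (f k) * g k)"

lemma ip_cnj: "cnj (ip S f g) = ip S g f"
  by (simp add: ip_def mult.commute)

lemma ip_self: "ip S f f = of_real (\<Sum>k\<in>S. (cmod (f k))^2)"
  unfolding ip_def of_real_sum by (rule sum.cong) (simp_all add: complex_norm_square mult.commute del: of_real_power)

lemma ip_self_real: "ip S f f = of_real (Re (ip S f f))"
  by (simp add: ip_self)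

lemma ip_self_nonneg: "0 \<le> Re (ip S f f)"
  by (simp add: ip_self sum_nonneg)

lemma ip_right_lin: "ip S f (\<lambda>k. a * g k + b * h k) = a * ip S f g + b * ip S f h"
  by (simp add: ip_def algebra_simps sum.distrib sum_distrib_left)

lemma ip_left_lin: "ip S (\<lambda>k. a * f k + b * h k) g = cnj a * ip S f g + cnj b * ip S h g"
  by (simp add: ip_def algebra_simps sum.distrib sum_distrib_left)

lemma ip_cs: "cmod (ip S f g) \<le> sqrt (Re (ip S f f)) * sqrt (Re (ip S g g))"
proof -
  have "cmod (ip S f g) \<le> (\<Sum>k\<in>S. cmod (f k) * cmod (g k))"
    unfolding ip_def by (rule order_trans[OF norm_sum]) (simp add: norm_mult)
  also have "\<dots> = sqrt ((\<Sum>k\<in>S. cmod (f k) * cmod (g k))^2)"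
    by (simp add: sum_nonneg)
  also have "\<dots> \<le> sqrt ((\<Sum>k\<in>S. (cmod (f k))^2) * (\<Sum>k\<in>S. (cmod (g k))^2))"
    by (rule real_sqrt_le_mono, rule Cauchy_Schwarz_ineq_sum)
  also have "\<dots> = sqrt (Re (ip S f f)) * sqrt (Re (ip S g g))"
    by (simp add: ip_self real_sqrt_mult)
  finally show ?thesis .
qed

lemma ip_unit_le1: "ip S x x = 1 \<Longrightarrow> ip S y y = 1 \<Longrightarrow> cmod (ip S x y) \<le> 1"
  using ip_cs[of S x y] by simp

lemma chain:
  assumes x: "ip S x x = 1" and y: "ip S y y = 1" and z: "ip S z z = 1"
  shows "cmod (ip S x z) \<ge> cmod (ip S x y) * cmod (ip S y z)
            - sqrt (1 - (cmod (ip S x y))^2) * sqrt (1 - (cmod (ip S y z))^2)"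
proof -
  define x' where "x' = (\<lambda>k. 1 * x k + (- ip S y x) * y k)"
  define z' where "z' = (\<lambda>k. 1 * z k + (- ip S y z) * y k)"
  have c1: "cnj (ip S y x) = ip S x y" by (simp add: ip_cnj)
  have c2: "ip S z y = cnj (ip S y z)" by (simp add: ip_cnj)
  have Lx: "ip S x' w = ip S x w - ip S x y * ip S y w" for w
    unfolding x'_def ip_left_lin using c1 by simp
  have Lz: "ip S z' w = ip S z w - ip S z y * ip S y w" for w
    unfolding z'_def ip_left_lin by (simp add: ip_cnj)
  have a1: "ip S x x' = 1 - ip S y x * ip S x y" unfolding x'_def ip_right_lin using x by simp
  have a2: "ip S y x' = 0" unfolding x'_def ip_right_lin using y by simp
  have b1: "ip S z z' = 1 - ip S y z * ip S z y" unfolding z'_def ip_right_lin using z by simp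
  have b2: "ip S y z' = 0" unfolding z'_def ip_right_lin using y by simp
  have n1: "ip S x' x' = 1 - of_real ((cmod (ip S x y))^2)"
  proof -
    have "ip S y x = cnj (ip S x y)" by (simp add: ip_cnj)
    then have "ip S x y * ip S y x = of_real ((cmod (ip S x y))^2)"
      by (simp add: complex_norm_square del: of_real_power)
    then show ?thesis using Lx[of x'] a1 a2 by (simp add: mult.commute)
  qed
  have n2: "ip S z' z' = 1 - of_real ((cmod (ip S y z))^2)"
  proof -
    have "ip S y z * cnj (ip S y z) = of_real ((cmod (ip S y z))^2)"
      by (simp add: complex_norm_square del: of_real_power)
    then show ?thesis using Lz[of z'] b1 b2 c2 by (simp add: mult.commute)
  qed
  have e1: "ip S x' z' = ip S x z - ip S x y * ip S y z"
  proof -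
    have "ip S x z' = ip S x z - ip S y z * ip S x y" unfolding z'_def ip_right_lin by simp
    then show ?thesis using Lx[of z'] b2 by (simp add: mult.commute)
  qed
  have "cmod (ip S x y) * cmod (ip S y z) = cmod (ip S x z - ip S x' z')"
    using e1 by (simp add: norm_mult)
  also have "\<dots> \<le> cmod (ip S x z) + cmod (ip S x' z')" by (rule norm_triangle_ineq4)
  also have "cmod (ip S x' z') \<le> sqrt (Re (ip S x' x')) * sqrt (Re (ip S z' z'))" by (rule ip_cs)
  finally show ?thesis using n1 n2 by simp
qed



lemma proj_sandwich: "K ** proj v ** adj K = proj (K *v v)"
proof -
  have "(K ** proj v ** adj K) $ i $ j = proj (K *v v) $ i $ j" for i j
  proof -
    have "(K ** proj v ** adj K) $ i $ j = (\<Sum>l\<in>UNIV. (\<Sum>k\<in>UNIV. K $ i $ k * (v $ k * cnj (v $ l))) * cnj (K $ j $ l))"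
      by (simp add: matrix_matrix_mult_def proj_def adj_def)
    also have "\<dots> = (\<Sum>k\<in>UNIV. K $ i $ k * v $ k) * (\<Sum>l\<in>UNIV. cnj (K $ j $ l * v $ l))"
      by (simp add: sum_product sum_distrib_left sum_distrib_right algebra_simps)
    also have "\<dots> = proj (K *v v) $ i $ j"
      by (simp add: proj_def matrix_vector_mult_def cnj_sum)
    finally show ?thesis .
  qed
  then show ?thesis by (simp add: vec_eq_iff)
qed

lemma kraus_proj: "kraus_map Ks (proj v) = (\<Sum>K\<leftarrow>Ks. proj (K *v v))"
  by (simp add: kraus_map_def proj_sandwich)

lemma trace_proj: "trace (proj x) = cinner x x"
  by (simp add: trace_def proj_def cinner_def mult.commute)

lemma proj_mult: "proj x *v w = cinner x w *s x"
  by (simp add: vec_eq_iff proj_def matrix_vector_mult_def cinner_def sum_distrib_left algebra_simps)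

lemma cinner_scale: "cinner v (c *s w) = c * cinner v w"
  by (simp add: cinner_def sum_distrib_left algebra_simps)

lemma cinner_cnj: "cnj (cinner v w) = cinner w v"
  by (simp add: cinner_def mult.commute)

lemma cinner_proj: "cinner w (proj x *v w) = of_real ((cmod (cinner x w))^2)"
proof -
  have "cinner w (proj x *v w) = cinner x w * cnj (cinner x w)"
    by (simp add: proj_mult cinner_scale cinner_cnj mult.commute)
  then show ?thesis by (simp add: complex_norm_square del: of_real_power)
qed

lemma psd_proj: "psd (proj x)"
  unfolding psd_def cinner_proj by simp

lemma trace_sum_list: "trace (\<Sum>K\<leftarrow>Ks. f K) = (\<Sum>K\<leftarrow>Ks. trace (f K :: complex^'n^'n))"
  by (induction Ks) (simp_all add: trace_add, simp add: trace_def)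

lemma mult_sum_list: "(\<Sum>K\<leftarrow>Ks. f K :: complex^'n^'n) *v w = (\<Sum>K\<leftarrow>Ks. f K *v w)"
  by (induction Ks) (simp_all add: matrix_vector_mult_add_rdistrib)

lemma cinner_add: "cinner v (a + b) = cinner v a + cinner v b"
  by (simp add: cinner_def algebra_simps sum.distrib)

lemma cinner_sum_list: "cinner v (\<Sum>K\<leftarrow>Ks. f K) = (\<Sum>K\<leftarrow>Ks. cinner v (f K))"
  by (induction Ks) (simp_all add: cinner_add, simp add: cinner_def)

lemma trace_kraus_proj: "trace (kraus_map Ks (proj v)) = (\<Sum>K\<leftarrow>Ks. cinner (K *v v) (K *v v))"
  by (simp add: kraus_proj trace_sum_list trace_proj)

lemma fid_kraus_proj: "cinner w (kraus_map Ks (proj v) *v w) = (\<Sum>K\<leftarrow>Ks. of_real ((cmod (cinner (K *v v) w))^2))"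
  by (simp add: kraus_proj mult_sum_list cinner_sum_list cinner_proj)

lemma cinner_ip: "cinner v w = ip UNIV (($) v) (($) w)"
  by (simp add: cinner_def ip_def)



lemma cos_arccos_add:
  assumes "-1 \<le> X" "X \<le> 1" "-1 \<le> Y" "Y \<le> 1"
  shows "X * Y - sqrt (1 - X^2) * sqrt (1 - Y^2) = cos (arccos X + arccos Y)"
  using assms by (simp add: cos_add sin_arccos)

lemma cos_less_mono: "0 \<le> x \<Longrightarrow> x < y \<Longrightarrow> y \<le> pi \<Longrightarrow> cos y < cos x"
  by (rule cos_monotone_0_pi) auto

lemma geo:
  assumes u: "ip S u u = 1" and A: "ip S Ah Ah = 1" and B: "ip S Bh Bh = 1" and v: "ip S v v = 1"
    and uv: "cmod (ip S u v) \<le> t" and t0: "0 \<le> t" and tc: "t \<le> c" and cg: "c \<le> cmod (ip S Ah Bh)"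
  shows "min (cmod (ip S u Ah)) (cmod (ip S Bh v)) \<le> cos ((arccos t - arccos c) / 2)"
proof (rule ccontr)
  define X where "X = cmod (ip S u Ah)"
  define g where "g = cmod (ip S Ah Bh)"
  define Y where "Y = cmod (ip S Bh v)"
  define W where "W = cmod (ip S u Bh)"
  define T where "T = arccos t"
  define C where "C = arccos c"
  define F where "F = cos ((T - C) / 2)"
  assume "\<not> ?thesis"
  then have XF: "F < X" and YF: "F < Y" unfolding X_def Y_def F_def T_def C_def by auto
  have X1: "X \<le> 1" unfolding X_def using ip_unit_le1[OF u A] .
  have Y1: "Y \<le> 1" unfolding Y_def using ip_unit_le1[OF B v] .
  have g1: "g \<le> 1" unfolding g_def using ip_unit_le1[OF A B] .
  have W1: "W \<le> 1" unfolding W_def using ip_unit_le1[OF u B] .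
  have X0: "0 \<le> X" "0 \<le> Y" "0 \<le> g" "0 \<le> W" unfolding X_def Y_def g_def W_def by auto
  have c1: "c \<le> 1" using cg g1 g_def by simp
  have t1: "t \<le> 1" using tc c1 by simp
  have T2: "T \<le> pi/2" unfolding T_def using t0 t1 arccos_le_pi2 by auto
  have CT: "C \<le> T" unfolding T_def C_def using tc c1 t0 by (intro arccos_le_arccos) auto
  have C0: "0 \<le> C" unfolding C_def by (rule arccos_lbound) (use c1 t0 tc in auto)
  define a where "a = arccos X"
  define b where "b = arccos Y"
  define ga where "ga = arccos g"
  have a0: "0 \<le> a" "a \<le> pi/2" unfolding a_def using X0 X1 arccos_le_pi2 arccos_lbound by auto
  have b0: "0 \<le> b" "b \<le> pi/2" unfolding b_def using X0 Y1 arccos_le_pi2 arccos_lbound by auto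
  have ga0: "0 \<le> ga" unfolding ga_def using X0 g1 arccos_lbound by auto
  have gaC: "ga \<le> C" unfolding ga_def C_def g_def using cg g1[unfolded g_def] c1 t0 tc by (intro arccos_le_arccos) auto
  have aT: "a < (T - C) / 2"
  proof (rule ccontr)
    assume "\<not> a < (T - C) / 2"
    then have "cos a \<le> cos ((T - C)/2)"
      using a0 CT T2 by (intro cos_monotone_0_pi_le) auto
    then show False using XF X0 X1 unfolding a_def F_def by simp
  qed
  have bT: "b < (T - C) / 2"
  proof (rule ccontr)
    assume "\<not> b < (T - C) / 2"
    then have "cos b \<le> cos ((T - C)/2)"
      using b0 CT T2 by (intro cos_monotone_0_pi_le) auto
    then show False using YF X0 Y1 unfolding b_def F_def by simp
  qed
  have "W \<ge> X * g - sqrt (1 - X^2) * sqrt (1 - g^2)"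
    unfolding W_def X_def g_def by (rule chain[OF u A B])
  also have "X * g - sqrt (1 - X^2) * sqrt (1 - g^2) = cos (a + ga)"
    unfolding a_def ga_def using X0 X1 g1 by (intro cos_arccos_add) auto
  finally have Wc: "cos (a + ga) \<le> W" .
  have aga: "a + ga \<le> pi/2" using aT gaC CT T2 C0 by (simp add: field_simps)
  define w where "w = arccos W"
  have w0: "0 \<le> w" unfolding w_def using X0 W1 arccos_lbound by auto
  have wle: "w \<le> a + ga"
  proof -
    have "w \<le> arccos (cos (a + ga))" unfolding w_def
      using Wc W1 a0 ga0 aga by (intro arccos_le_arccos) (auto intro: cos_ge_minus_one)
    also have "\<dots> = a + ga" using a0 ga0 aga by (intro arccos_cos) auto
    finally show ?thesis .
  qed
  have "cmod (ip S u v) \<ge> W * Y - sqrt (1 - W^2) * sqrt (1 - Y^2)"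
    unfolding W_def Y_def by (rule chain[OF u B v])
  also have "W * Y - sqrt (1 - W^2) * sqrt (1 - Y^2) = cos (w + b)"
    unfolding w_def b_def using X0 W1 Y1 by (intro cos_arccos_add) auto
  finally have "cos (w + b) \<le> t" using uv by simp
  moreover have "cos T < cos (w + b)"
    using w0 b0 wle aT bT gaC T2 by (intro cos_less_mono) auto
  moreover have "cos T = t" unfolding T_def using t0 t1 by simp
  ultimately show False by simp
qed

lemma num_g:
  fixes x y s p :: real
  assumes "p \<le> x" "x \<le> 1" "p \<le> y" "y \<le> 1" "0 < p" "s \<le> 1"
  shows "(1 - (1 - s) / p) * sqrt (x * y) \<le> s - sqrt ((1 - x) * (1 - y))"
proof -
  have g: "sqrt (x * y) \<le> (x + y) / 2" using assms
    by (metis arith_geo_mean_sqrt le_less_trans less_eq_real_def)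
  have h: "sqrt ((1 - x) * (1 - y)) \<le> ((1 - x) + (1 - y)) / 2" using assms
    by (intro arith_geo_mean_sqrt) auto
  have gp: "p \<le> sqrt (x * y)"
  proof -
    have "p * p \<le> x * y" using assms by (intro mult_mono) auto
    then have "sqrt (p * p) \<le> sqrt (x * y)" by (rule real_sqrt_le_mono)
    then show ?thesis using assms by simp
  qed
  have "(1 - s) / p * sqrt (x * y) \<ge> 1 - s"
  proof -
    have "(1 - s) / p * sqrt (x * y) = (1 - s) * (sqrt (x * y) / p)" by simp
    moreover have "sqrt (x * y) / p \<ge> 1" using gp assms by simp
    ultimately show ?thesis using assms by (metis mult_left_mono mult.right_neutral diff_ge_0_iff_ge)
  qed
  then show ?thesis using g h by (simp add: algebra_simps)
qed



lemma ip_scale: "ip S (\<lambda>k. a * f k) (\<lambda>k. b * g k) = cnj a * b * ip S f g"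
  by (simp add: ip_def sum_distrib_left algebra_simps)

lemma quad_cs:
  fixes a b :: real and z :: complex
  assumes H: "\<And>l::complex. 0 \<le> a + 2 * Re (l * z) + (cmod l)^2 * b" and b0: "0 \<le> b"
  shows "(cmod z)^2 \<le> a * b"
proof -
  have zz: "cnj z * z = of_real ((cmod z)^2)"
    by (simp add: complex_norm_square mult.commute del: of_real_power)
  show ?thesis
  proof (cases "b = 0")
    case False
    then have bp: "0 < b" using b0 by simp
    define l where "l = - cnj z / of_real b"
    have "l * z = - (cnj z * z) / of_real b" unfolding l_def by simp
    also have "\<dots> = of_real (- ((cmod z)^2) / b)" unfolding zz by simp
    finally have lz: "Re (l * z) = - ((cmod z)^2) / b" by (simp only: Re_complex_of_real)
    have ll: "(cmod l)^2 = (cmod z)^2 / b^2" unfolding l_def using bp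
      by (simp add: norm_divide power_divide)
    have "0 \<le> a + 2 * (- ((cmod z)^2) / b) + (cmod z)^2 / b^2 * b" using H[of l] unfolding lz ll .
    also have "\<dots> = a - (cmod z)^2 / b" using bp by (simp add: power2_eq_square field_simps)
    finally show ?thesis using bp by (simp add: field_simps)
  next
    case True
    show ?thesis
    proof (cases "z = 0")
      case False
      define r where "r = (\<bar>a\<bar> + 1) / (2 * (cmod z)^2)"
      have zp: "0 < (cmod z)^2" using False by simp
      define l where "l = - of_real r * cnj z"
      have "l * z = - of_real r * (cnj z * z)" unfolding l_def by simp
      also have "\<dots> = of_real (- r * (cmod z)^2)" unfolding zz by simp
      finally have lz: "Re (l * z) = - r * (cmod z)^2" by (simp only: Re_complex_of_real)
      have "0 \<le> a + 2 * (- r * (cmod z)^2)" using H[of l] True unfolding lz by simp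
      also have "2 * (- r * (cmod z)^2) = - (\<bar>a\<bar> + 1)" unfolding r_def using zp by (simp add: field_simps)
      finally show ?thesis by simp
    qed (use True in simp)
  qed
qed

lemma form_cs_ip:
  assumes H: "\<And>l. 0 \<le> Re (ip T (\<lambda>k. 1 * X k + l * Y k) (\<lambda>k. 1 * X k + l * Y k)
                     - ip S (\<lambda>k. 1 * P k + l * Q k) (\<lambda>k. 1 * P k + l * Q k))"
    and B0: "0 \<le> Re (ip T Y Y - ip S Q Q)"
  shows "(cmod (ip T X Y - ip S P Q))^2 \<le> Re (ip T X X - ip S P P) * Re (ip T Y Y - ip S Q Q)"
proof -
  define z where "z = ip T X Y - ip S P Q"
  define a where "a = Re (ip T X X - ip S P P)"
  define b where "b = Re (ip T Y Y - ip S Q Q)"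
  have r1: "ip T Y X = cnj (ip T X Y)" "ip S Q P = cnj (ip S P Q)" by (simp_all add: ip_cnj)
  have bb: "ip T Y Y - ip S Q Q = of_real b"
    unfolding b_def by (subst (1 2) ip_self_real) simp
  have aa: "ip T X X - ip S P P = of_real a"
    unfolding a_def by (subst (1 2) ip_self_real) simp
  have b0: "0 \<le> b" using B0 unfolding b_def .
  have Hq: "0 \<le> a + 2 * Re (l * z) + (cmod l)^2 * b" for l
  proof -
    have e: "ip T (\<lambda>k. 1 * X k + l * Y k) (\<lambda>k. 1 * X k + l * Y k)
                     - ip S (\<lambda>k. 1 * P k + l * Q k) (\<lambda>k. 1 * P k + l * Q k)
          = (ip T X X - ip S P P) + l * z + cnj (l * z) + (cnj l * l) * (ip T Y Y - ip S Q Q)"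
      unfolding z_def ip_left_lin ip_right_lin r1 complex_cnj_mult complex_cnj_diff complex_cnj_one
      by algebra
    have "cnj l * l = of_real ((cmod l)^2)" by (simp add: complex_norm_square mult.commute del: of_real_power)
    then have "Re (ip T (\<lambda>k. 1 * X k + l * Y k) (\<lambda>k. 1 * X k + l * Y k)
                     - ip S (\<lambda>k. 1 * P k + l * Q k) (\<lambda>k. 1 * P k + l * Q k))
         = a + 2 * Re (l * z) + (cmod l)^2 * b"
      unfolding e aa bb by (simp del: of_real_power)
    then show ?thesis using H[of l] by simp
  qed
  show ?thesis unfolding z_def[symmetric] a_def[symmetric] b_def[symmetric]
    by (rule quad_cs[OF Hq b0])
qed



definition bigv :: "(complex^'n^'n) list \<Rightarrow> complex^'n \<Rightarrow> nat \<times> 'n \<Rightarrow> complex" where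
  "bigv Ks x = (\<lambda>(i,j). (Ks!i *v x) $ j)"

lemma sum_prod_split: "(\<Sum>k\<in>A\<times>B. f k) = (\<Sum>i\<in>A. \<Sum>j\<in>B. f (i,j))"
  by (simp add: sum.cartesian_product)

lemma sum_list_idx: "(\<Sum>K\<leftarrow>Ks. h K) = (\<Sum>i<length Ks. h (Ks!i))"
  by (simp add: sum_list_sum_nth atLeast0LessThan)

lemma ip_bigv: "ip ({..<length Ks} \<times> UNIV) (bigv Ks x) (bigv Ks y) = (\<Sum>K\<leftarrow>Ks. cinner (K *v x) (K *v y))"
  by (simp add: ip_def bigv_def sum_prod_split sum_list_idx cinner_def)

lemma bigv_lin: "bigv Ks (x + l *s y) = (\<lambda>k. 1 * bigv Ks x k + l * bigv Ks y k)"
  by (auto simp: bigv_def matrix_vector_mult_def sum.distrib sum_distrib_left algebra_simps fun_eq_iff)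

lemma vec_lin: fixes x y :: "complex^'n" shows "($) (x + l *s y) = (\<lambda>k. 1 * (x $ k) + l * (y $ k))"
  by (rule ext) simp

lemma defect_cs:
  fixes Ks :: "(complex^'n^'n) list"
  assumes qo: "\<forall>v. Re (\<Sum>K\<leftarrow>Ks. cinner (K *v v) (K *v v)) \<le> Re (cinner v v)"
  shows "(cmod (cinner x y - (\<Sum>K\<leftarrow>Ks. cinner (K *v x) (K *v y))))^2
          \<le> Re (cinner x x - (\<Sum>K\<leftarrow>Ks. cinner (K *v x) (K *v x)))
           * Re (cinner y y - (\<Sum>K\<leftarrow>Ks. cinner (K *v y) (K *v y)))"
proof -
  let ?S = "{..<length Ks} \<times> (UNIV :: 'n set)"
  have "(cmod (ip UNIV (($) x) (($) y) - ip ?S (bigv Ks x) (bigv Ks y)))^2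
        \<le> Re (ip UNIV (($) x) (($) x) - ip ?S (bigv Ks x) (bigv Ks x))
         * Re (ip UNIV (($) y) (($) y) - ip ?S (bigv Ks y) (bigv Ks y))"
  proof (rule form_cs_ip)
    fix l
    have "0 \<le> Re (cinner (x + l *s y) (x + l *s y)) - Re (\<Sum>K\<leftarrow>Ks. cinner (K *v (x + l *s y)) (K *v (x + l *s y)))"
      using spec[OF qo, of "x + l *s y"] by (simp only: diff_ge_0_iff_ge)
    then show "0 \<le> Re (ip UNIV (\<lambda>k. 1 * (x $ k) + l * (y $ k)) (\<lambda>k. 1 * (x $ k) + l * (y $ k)) -
             ip ?S (\<lambda>k. 1 * bigv Ks x k + l * bigv Ks y k) (\<lambda>k. 1 * bigv Ks x k + l * bigv Ks y k))"
      unfolding vec_lin[symmetric] bigv_lin[symmetric] ip_bigv cinner_ip[symmetric] by (simp only: minus_complex.sel)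
  next
    show "0 \<le> Re (ip UNIV (($) y) (($) y) - ip ?S (bigv Ks y) (bigv Ks y))"
      using spec[OF qo, of y] unfolding ip_bigv cinner_ip[symmetric] by (simp only: minus_complex.sel diff_ge_0_iff_ge)
  qed
  then show ?thesis unfolding ip_bigv cinner_ip[symmetric] .
qed

lemma scaleR_mat_vec: "((c::real) *\<^sub>R (M::complex^'n^'n)) *v w = c *\<^sub>R (M *v w)"
  by (simp add: vec_eq_iff matrix_vector_mult_def scaleR_sum_right)

lemma cinner_scaleR: "cinner v ((c::real) *\<^sub>R w) = of_real c * cinner v w"
proof -
  have e: "(c *\<^sub>R w) $ i = of_real c * w $ i" for i by (subst vector_scaleR_component) (rule scaleR_conv_of_real)
  show ?thesis unfolding cinner_def e sum_distrib_left by (rule sum.cong) (simp_all add: mult.left_commute)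
qed

lemma cmod_cinner_sym: "cmod (cinner a b) = cmod (cinner b a)"
  by (metis cinner_cnj complex_mod_cnj)

lemma fid_formula:
  "Re (cinner phi (out_state (kraus_map Ks) v *v phi))
     = (\<Sum>i<length Ks. (cmod (cinner phi (Ks!i *v v)))^2) / succ_prob (kraus_map Ks) v"
proof -
  have "cinner phi (out_state (kraus_map Ks) v *v phi)
      = of_real (1 / succ_prob (kraus_map Ks) v) * (\<Sum>K\<leftarrow>Ks. of_real ((cmod (cinner (K *v v) phi))^2))"
    unfolding out_state_def scaleR_mat_vec cinner_scaleR fid_kraus_proj ..
  also have "(\<Sum>K\<leftarrow>Ks. of_real ((cmod (cinner (K *v v) phi))^2)) = (of_real (\<Sum>i<length Ks. (cmod (cinner phi (Ks!i *v v)))^2) :: complex)"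
    unfolding sum_list_idx of_real_sum
    by (rule sum.cong) (simp_all add: cmod_cinner_sym[of phi] del: of_real_power)
  finally show ?thesis by (simp del: of_real_power)
qed



lemma ip_U_A:
  fixes Ks :: "(complex^'n^'n) list"
  shows "ip ({..<length Ks} \<times> UNIV) (\<lambda>(i,j). cinner phi (Ks!i *v v) * phi $ j) (bigv Ks v)
       = ip {..<length Ks} (\<lambda>i. cinner phi (Ks!i *v v)) (\<lambda>i. cinner phi (Ks!i *v v))"
  unfolding ip_def sum_prod_split bigv_def
  by (rule sum.cong) (simp_all add: cinner_def sum_distrib_left algebra_simps)

lemma ip_U_V:
  fixes phi chi :: "complex^'n"
  shows "ip (I \<times> UNIV) (\<lambda>(i,j). c i * phi $ j) (\<lambda>(i,j). d i * chi $ j)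
       = ip I c d * cinner phi chi"
  unfolding ip_def sum_prod_split
  by (simp add: cinner_def sum_distrib_left sum_distrib_right algebra_simps) (rule sum.swap)

lemma unit_norm: "Re (ip S f f) = r \<Longrightarrow> 0 < r \<Longrightarrow>
   ip S (\<lambda>k. of_real (1 / sqrt r) * f k) (\<lambda>k. of_real (1 / sqrt r) * f k) = 1"
  apply (subst ip_scale, subst ip_self_real)
  by (simp add: power_divide flip: of_real_power of_real_mult)



lemma upper:
  fixes Ks :: "(complex^'n^'n) list" and psip psim phip phim :: "complex^'n" and p :: real
  assumes u1: "cinner psip psip = 1" "cinner psim psim = 1" "cinner phip phip = 1" "cinner phim phim = 1"
    and qo: "\<forall>v. Re (trace (kraus_map Ks (proj v))) \<le> Re (cinner v v)"
    and pp: "p \<le> succ_prob (kraus_map Ks) psip" "p \<le> succ_prob (kraus_map Ks) psim" and p0: "0 < p"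
    and tc: "cmod (cinner phip phim) \<le> 1 - (1 - cmod (cinner psip psim)) / p"
    and s1: "cmod (cinner psip psim) \<le> 1"
  shows "FE (kraus_map Ks) psip psim phip phim \<le>
           cos ((arccos (cmod (cinner phip phim)) - arccos (1 - (1 - cmod (cinner psip psim)) / p)) / 2)"
proof -
  define E where "E = kraus_map Ks"
  define m where "m = length Ks"
  define S where "S = {..<m} \<times> (UNIV :: 'n set)"
  define t where "t = cmod (cinner phip phim)"
  define s where "s = cmod (cinner psip psim)"
  define c where "c = 1 - (1 - s)/p"
  define xp where "xp = succ_prob E psip"
  define xm where "xm = succ_prob E psim"
  define cp where "cp = (\<lambda>i. cinner phip (Ks!i *v psip))"
  define cm where "cm = (\<lambda>i. cinner phim (Ks!i *v psim))"
  define Np where "Np = Re (ip {..<m} cp cp)"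
  define Nm where "Nm = Re (ip {..<m} cm cm)"
  define Fs where "Fs = cos ((arccos t - arccos c)/2)"
  have qo': "\<forall>v. Re (\<Sum>K\<leftarrow>Ks. cinner (K *v v) (K *v v)) \<le> Re (cinner v v)"
    using qo by (simp add: trace_kraus_proj)
  have xpG: "xp = Re (\<Sum>K\<leftarrow>Ks. cinner (K *v psip) (K *v psip))"
    unfolding xp_def succ_prob_def E_def trace_kraus_proj ..
  have xmG: "xm = Re (\<Sum>K\<leftarrow>Ks. cinner (K *v psim) (K *v psim))"
    unfolding xm_def succ_prob_def E_def trace_kraus_proj ..
  have xp1: "xp \<le> 1" using spec[OF qo', of psip] u1 xpG by simp
  have xm1: "xm \<le> 1" using spec[OF qo', of psim] u1 xmG by simp
  have xpp: "p \<le> xp" "p \<le> xm" using pp by (simp_all add: xp_def xm_def E_def)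
  have Fp: "pure_fid phip (out_state E psip) = sqrt (Np / xp)"
    unfolding pure_fid_def E_def fid_formula Np_def ip_self by (simp add: cp_def m_def xp_def E_def)
  have Fm: "pure_fid phim (out_state E psim) = sqrt (Nm / xm)"
    unfolding pure_fid_def E_def fid_formula Nm_def ip_self by (simp add: cm_def m_def xm_def E_def)
  have FE_eq: "FE E psip psim phip phim = min (sqrt (Np/xp)) (sqrt (Nm/xm))"
    by (simp add: FE_def Fp Fm)
  have t0: "0 \<le> t" unfolding t_def by simp
  have c1: "c \<le> 1" unfolding c_def s_def using s1 p0 by simp
  have tcc: "t \<le> c" unfolding t_def c_def s_def using tc .
  have Fs0: "0 \<le> Fs"
  proof -
    have "arccos c \<le> arccos t" using t0 tcc c1 by (intro arccos_le_arccos) auto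
    moreover have "arccos t \<le> pi/2" using t0 tcc c1 by (intro arccos_le_pi2) auto
    moreover have "0 \<le> arccos c" using t0 tcc c1 by (intro arccos_lbound) auto
    ultimately show ?thesis unfolding Fs_def by (intro cos_ge_zero) auto
  qed
  have Np0: "0 \<le> Np" unfolding Np_def by (rule ip_self_nonneg)
  have Nm0: "0 \<le> Nm" unfolding Nm_def by (rule ip_self_nonneg)
  have "min (sqrt (Np/xp)) (sqrt (Nm/xm)) \<le> Fs"
  proof (cases "Np = 0 \<or> Nm = 0")
    case True
    then show ?thesis using Fs0 by auto
  next
    case False
    then have Npp: "0 < Np" and Nmp: "0 < Nm" using Np0 Nm0 by auto
    have xpp0: "0 < xp" "0 < xm" using xpp p0 by auto
    define U where "U = (\<lambda>(i,j). cp i * phip $ j)"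
    define V where "V = (\<lambda>(i,j). cm i * phim $ j)"
    define A where "A = bigv Ks psip"
    define B where "B = bigv Ks psim"
    define u where "u = (\<lambda>k. of_real (1 / sqrt Np) * U k)"
    define v where "v = (\<lambda>k. of_real (1 / sqrt Nm) * V k)"
    define Ah where "Ah = (\<lambda>k. of_real (1 / sqrt xp) * A k)"
    define Bh where "Bh = (\<lambda>k. of_real (1 / sqrt xm) * B k)"
    have UA: "ip S U A = of_real Np"
      unfolding U_def A_def S_def m_def cp_def ip_U_A Np_def[unfolded cp_def m_def] by (rule ip_self_real)
    have VB: "ip S V B = of_real Nm"
      unfolding V_def B_def S_def m_def cm_def ip_U_A Nm_def[unfolded cm_def m_def] by (rule ip_self_real)
    have UU: "Re (ip S U U) = Np" unfolding U_def S_def ip_U_V Np_def using u1 by simp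
    have VV: "Re (ip S V V) = Nm" unfolding V_def S_def ip_U_V Nm_def using u1 by simp
    have AA: "Re (ip S A A) = xp" unfolding A_def S_def m_def ip_bigv xpG ..
    have BB: "Re (ip S B B) = xm" unfolding B_def S_def m_def ip_bigv xmG ..
    have un: "ip S u u = 1" "ip S v v = 1" "ip S Ah Ah = 1" "ip S Bh Bh = 1"
      unfolding u_def v_def Ah_def Bh_def
      by (rule unit_norm, fact, fact)+
    have sNp: "sqrt Np * sqrt Np = Np" "sqrt Nm * sqrt Nm = Nm" "sqrt xp * sqrt xp = xp" "sqrt xm * sqrt xm = xm"
      using Npp Nmp xpp0 by simp_all
    have uAh: "cmod (ip S u Ah) = sqrt (Np / xp)"
    proof -
      have "ip S u Ah = of_real (1 / sqrt Np * (1 / sqrt xp) * Np)"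
        unfolding u_def Ah_def ip_scale UA by simp
      also have "1 / sqrt Np * (1 / sqrt xp) * Np = sqrt (Np / xp)"
        using Npp xpp0 sNp by (simp add: real_sqrt_divide field_simps)
      finally show ?thesis using Npp xpp0 by simp
    qed
    have Bhv: "cmod (ip S Bh v) = sqrt (Nm / xm)"
    proof -
      have "ip S v Bh = of_real (1 / sqrt Nm * (1 / sqrt xm) * Nm)"
        unfolding v_def Bh_def ip_scale VB by simp
      also have "1 / sqrt Nm * (1 / sqrt xm) * Nm = sqrt (Nm / xm)"
        using Nmp xpp0 sNp by (simp add: real_sqrt_divide field_simps)
      finally have "ip S v Bh = of_real (sqrt (Nm / xm))" .
      then have "ip S Bh v = of_real (sqrt (Nm / xm))" by (metis ip_cnj complex_cnj_complex_of_real)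
      then show ?thesis using Nmp xpp0 by simp
    qed
    have uv: "cmod (ip S u v) \<le> t"
    proof -
      have "ip S u v = of_real (1 / sqrt Np * (1 / sqrt Nm)) * (ip {..<m} cp cm * cinner phip phim)"
        unfolding u_def v_def ip_scale U_def V_def S_def ip_U_V by simp
      then have "cmod (ip S u v) = 1 / sqrt Np * (1 / sqrt Nm) * cmod (ip {..<m} cp cm) * t"
        unfolding t_def using Npp Nmp by (simp only: norm_mult norm_of_real) simp
      also have "\<dots> \<le> 1 / sqrt Np * (1 / sqrt Nm) * (sqrt Np * sqrt Nm) * t"
        using ip_cs[of "{..<m}" cp cm] t0 Npp Nmp unfolding Np_def[symmetric] Nm_def[symmetric]
        by (intro mult_right_mono mult_left_mono) auto
      also have "\<dots> = t" using Npp Nmp by simp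
      finally show ?thesis .
    qed
    define G where "G = (\<Sum>K\<leftarrow>Ks. cinner (K *v psip) (K *v psim))"
    have AB: "ip S A B = G" unfolding A_def B_def S_def m_def ip_bigv G_def ..
    have dcs: "(cmod (cinner psip psim - G))^2 \<le> (1 - xp) * (1 - xm)"
      using defect_cs[OF qo', of psip psim] u1 unfolding G_def xpG xmG by simp
    have "cmod (cinner psip psim - G) \<le> sqrt ((1 - xp) * (1 - xm))"
      using dcs by (simp add: real_le_rsqrt)
    moreover have "s \<le> cmod G + cmod (cinner psip psim - G)" unfolding s_def
      by (metis add.commute diff_add_cancel norm_triangle_ineq)
    ultimately have "s - sqrt ((1 - xp) * (1 - xm)) \<le> cmod G" by simp
    moreover have "c * sqrt (xp * xm) \<le> s - sqrt ((1 - xp) * (1 - xm))"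
      unfolding c_def using xpp xp1 xm1 p0 s1 s_def by (intro num_g) auto
    ultimately have cG: "c * (sqrt xp * sqrt xm) \<le> cmod G" by (simp add: real_sqrt_mult)
    have AhBh: "cmod (ip S Ah Bh) = cmod G / (sqrt xp * sqrt xm)"
      unfolding Ah_def Bh_def ip_scale AB using xpp0 by (simp add: norm_mult norm_divide)
    have cg: "c \<le> cmod (ip S Ah Bh)" unfolding AhBh using cG xpp0 by (simp add: field_simps)
    show ?thesis using geo[OF un(1) un(3) un(4) un(2) uv t0 tcc cg] unfolding uAh Bhv Fs_def .
  qed
  then show ?thesis unfolding FE_eq[unfolded E_def] Fs_def c_def s_def t_def .
qed



definition outer :: "complex^'n \<Rightarrow> complex^'n \<Rightarrow> complex^'n^'n" where
  "outer x y = (\<chi> i j. x $ i * cnj (y $ j))"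

lemma outer_mult_vec: "outer x y *v v = cinner y v *s x"
  by (simp add: vec_eq_iff outer_def matrix_vector_mult_def cinner_def sum_distrib_left algebra_simps)

lemma adj_outer: "adj (outer x y) = outer y x"
  by (simp add: vec_eq_iff outer_def adj_def mult.commute)

lemma adj_add: "adj (A + B) = adj A + adj B"
  by (simp add: vec_eq_iff adj_def)

lemma adj_diff: "adj (A - B) = adj A - adj B"
  by (simp add: vec_eq_iff adj_def)

lemma adj_mat1: "adj (mat 1 :: complex^'n^'n) = mat 1"
  by (simp add: vec_eq_iff adj_def mat_def)

lemma matrix_add_rdistrib': "((A::complex^'n^'n) + B) ** C = A ** C + B ** C"
  by (simp add: vec_eq_iff matrix_matrix_mult_def sum.distrib algebra_simps)

lemma matrix_diff_rdistrib': "((A::complex^'n^'n) - B) ** C = A ** C - B ** C"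
  by (simp add: vec_eq_iff matrix_matrix_mult_def sum_subtractf algebra_simps)

lemma trace_outer_mult: "trace (outer x y ** \<rho>) = cinner y (\<rho> *v x)"
  by (simp add: trace_def outer_def matrix_matrix_mult_def cinner_def matrix_vector_mult_def
      sum_distrib_left algebra_simps) (rule sum.swap)

lemma trace_sandwich: "trace ((K::complex^'n^'n) ** \<rho> ** adj K) = trace ((adj K ** K) ** \<rho>)"
  by (metis matrix_mul_assoc trace_mul_sym)

lemma cinner_scale_left: "cinner (c *s v) w = cnj c * cinner v w"
  by (simp add: cinner_def sum_distrib_left algebra_simps)

lemma cinner_add_left: "cinner (a + b) v = cinner a v + cinner b v"
  by (simp add: cinner_def algebra_simps sum.distrib)

lemma cinner_diff_left: "cinner (a - b) v = cinner a v - cinner b v"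
  by (simp add: cinner_def algebra_simps sum_subtractf)

lemma cinner_diff: "cinner v (a - b) = cinner v a - cinner v b"
  by (simp add: cinner_def algebra_simps sum_subtractf)

lemma cinner_zero[simp]: "cinner v 0 = 0" "cinner 0 v = 0"
  by (simp_all add: cinner_def)



lemma mat_vec_scale: "(M::complex^'n^'n) *v (c *s v) = c *s (M *v v)"
  by (simp add: vec_eq_iff matrix_vector_mult_def sum_distrib_left algebra_simps)

lemma qo_construct:
  fixes e1 e2 h1 h2 :: "complex^'n" and a b nh :: real
  assumes e11: "cinner e1 e1 = 1" and e12: "cinner e1 e2 = 0" and e22: "cinner e2 e2 *s e2 = e2"
    and h11: "cinner h1 h1 = 1" and h12: "cinner h1 h2 = 0" and h22: "cinner h2 h2 = of_real nh"
    and nh: "0 \<le> nh" "nh \<le> 1" and a1: "a^2 \<le> 1" and b1: "b^2 \<le> 1"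
  shows "quantum_operation (kraus_map [outer (of_real a *s h1) e1 + outer (of_real b *s h2) e2,
                                       mat 1 - outer e1 e1 - outer e2 e2])"
proof -
  define K where "K = outer (of_real a *s h1) e1 + outer (of_real b *s h2) e2"
  define K3 where "K3 = (mat 1 - outer e1 e1 - outer e2 e2 :: complex^'n^'n)"
  define Q where "Q = mat 1 - outer (of_real (1 - a^2) *s e1) e1 - outer (of_real (1 - b^2 * nh) *s e2) e2"
  have e21: "cinner e2 e1 = 0" using e12 by (metis cinner_cnj complex_cnj_zero)
  have h21: "cinner h2 h1 = 0" using h12 by (metis cinner_cnj complex_cnj_zero)
  have adjK: "adj K = outer e1 (of_real a *s h1) + outer e2 (of_real b *s h2)"
    unfolding K_def adj_add adj_outer ..
  have adjK3: "adj K3 = K3" unfolding K3_def adj_diff adj_outer adj_mat1 ..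
  have Qeq: "adj K ** K + adj K3 ** K3 = Q"
  proof (subst matrix_eq, intro allI)
    fix x :: "complex^'n"
    have e22': "cinner e2 x *s e2 - (cinner e2 e2 * cinner e2 x) *s e2 = 0"
      using e22 by (metis (no_types, lifting) diff_self vector_smult_assoc mult.commute)
    have "(adj K ** K + adj K3 ** K3) *v x = adj K *v (K *v x) + K3 *v (K3 *v x)"
      by (simp add: matrix_vector_mult_add_rdistrib matrix_vector_mul_assoc adjK3)
    also have "\<dots> = Q *v x - (cinner e2 x *s e2 - (cinner e2 e2 * cinner e2 x) *s e2)"
      unfolding adjK unfolding K_def K3_def Q_def
      by (simp add: matrix_vector_mult_add_rdistrib matrix_vector_mult_diff_rdistrib outer_mult_vec
          cinner_add cinner_diff cinner_scale cinner_scale_left e11 e12 e21 h11 h12 h21 h22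
          vec_eq_iff algebra_simps power2_eq_square)
    finally show "(adj K ** K + adj K3 ** K3) *v x = Q *v x" using e22' by simp
  qed
  have "quantum_operation (kraus_map [K, K3])" unfolding quantum_operation_def
  proof (intro conjI exI allI impI)
    fix \<rho> :: "complex^'n^'n"
    assume psd: "psd \<rho>"
    have "trace (kraus_map [K, K3] \<rho>) = trace (Q ** \<rho>)"
      unfolding kraus_map_def Qeq[symmetric]
      by (simp add: trace_sandwich trace_add matrix_add_rdistrib')
    also have "\<dots> = trace \<rho> - of_real (1 - a^2) * cinner e1 (\<rho> *v e1) - of_real (1 - b^2 * nh) * cinner e2 (\<rho> *v e2)"
      unfolding Q_def matrix_diff_rdistrib' trace_sub trace_outer_mult mat_vec_scale cinner_scale by simp
    finally have tr: "Re (trace (kraus_map [K, K3] \<rho>)) = Re (trace \<rho>) - (1 - a^2) * Re (cinner e1 (\<rho> *v e1))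
                  - (1 - b^2 * nh) * Re (cinner e2 (\<rho> *v e2))" by simp
    have "0 \<le> (1 - a^2) * Re (cinner e1 (\<rho> *v e1))" using psd a1 unfolding psd_def by simp
    moreover have "b^2 * nh \<le> 1" using b1 nh by (metis mult_le_one zero_le_power2)
    then have "0 \<le> (1 - b^2 * nh) * Re (cinner e2 (\<rho> *v e2))" using psd unfolding psd_def by simp
    ultimately show "Re (trace (kraus_map [K, K3] \<rho>)) \<le> Re (trace \<rho>)" unfolding tr by simp
  qed (rule refl)
  then show ?thesis unfolding K_def K3_def .
qed



lemma cinner_self_zero: "cinner v v = 0 \<Longrightarrow> v = (0::complex^'n)"
proof -
  assume "cinner v v = 0"
  then have "(\<Sum>k\<in>UNIV. (cmod (v $ k))^2) = 0" by (simp only: cinner_ip ip_self of_real_eq_0_iff)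
  then have "\<forall>k. (cmod (v $ k))^2 = 0" by (subst (asm) sum_nonneg_eq_0_iff) auto
  then show ?thesis by (simp add: vec_eq_iff)
qed

lemma unit_eq:
  assumes "cinner x x = 1" "cinner y y = 1" "cinner x y = 1"
  shows "x = (y::complex^'n)"
proof -
  have "cinner y x = 1" using assms(3) by (metis cinner_cnj complex_cnj_one)
  then have "cinner (x - y) (x - y) = 0" using assms by (simp add: cinner_diff cinner_diff_left)
  then show ?thesis using cinner_self_zero by fastforce
qed

lemma phase:
  fixes x y :: "complex^'n"
  assumes "cinner y y = 1"
  shows "\<exists>u w. cmod u = 1 \<and> y = u *s w \<and> cinner w w = 1 \<and> cinner x w = of_real (cmod (cinner x y))"
proof -
  define g where "g = cinner x y"
  define u where "u = (if g = 0 then 1 else g / of_real (cmod g))"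
  have u1: "cmod u = 1" unfolding u_def by (simp add: norm_divide)
  have uu: "cnj u * u = 1" using u1 by (metis complex_norm_square mult.commute of_real_1 power_one)
  have gu: "g = of_real (cmod g) * u" unfolding u_def by simp
  define w where "w = cnj u *s y"
  have uu': "u * cnj u = 1" using uu by (simp add: mult.commute)
  have "y = u *s w" unfolding w_def by (simp add: uu')
  moreover have "cinner w w = 1" unfolding w_def cinner_scale cinner_scale_left using assms uu
    by (simp add: mult.commute)
  moreover have "cinner x w = of_real (cmod g)" unfolding w_def cinner_scale g_def[symmetric]
    by (subst gu, subst mult.left_commute, simp add: uu)
  ultimately show ?thesis using u1 unfolding g_def by blast
qed

lemma cos_half_arccos: "-1 \<le> x \<Longrightarrow> x \<le> 1 \<Longrightarrow> cos (arccos x / 2) = sqrt ((1 + x) / 2)"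
proof -
  assume h: "-1 \<le> x" "x \<le> 1"
  define y where "y = arccos x / 2"
  have y0: "0 \<le> y" "y \<le> pi/2" unfolding y_def using arccos_lbound arccos_ubound h by auto
  have "cos (2 * y) = x" unfolding y_def using h by simp
  then have "(cos y)^2 = (1 + x) / 2" using cos_double_cos[of y] by simp
  moreover have "0 \<le> cos y" using y0 by (intro cos_ge_zero) auto
  ultimately show ?thesis unfolding y_def[symmetric] by (metis real_sqrt_unique)
qed

lemma sin_half_arccos: "-1 \<le> x \<Longrightarrow> x \<le> 1 \<Longrightarrow> sin (arccos x / 2) = sqrt ((1 - x) / 2)"
proof -
  assume h: "-1 \<le> x" "x \<le> 1"
  define y where "y = arccos x / 2"
  have y0: "0 \<le> y" "y \<le> pi/2" unfolding y_def using arccos_lbound arccos_ubound h by auto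
  have "cos (2 * y) = x" unfolding y_def using h by simp
  then have "(sin y)^2 = (1 - x) / 2" using cos_double_sin[of y] by simp
  moreover have "0 \<le> sin y" using y0 by (intro sin_ge_zero) auto
  ultimately show ?thesis unfolding y_def[symmetric] by (metis real_sqrt_unique)
qed

lemma hs1: "0 \<le> (q::real) \<Longrightarrow> q * (1 / sqrt (2 * q)) = sqrt (q / 2)"
proof (cases "q = 0")
  case False
  assume q: "0 \<le> q"
  then have qp: "0 < q" using False by simp
  have "(q * (1 / sqrt (2 * q)))^2 = q / 2"
    using qp by (simp add: power_divide power_mult_distrib power2_eq_square)
  moreover have "0 \<le> q * (1 / sqrt (2 * q))" using q by simp
  ultimately show ?thesis by (metis real_sqrt_unique)
qed simp

lemma hs2: "0 < (q::real) \<Longrightarrow> (1 / sqrt (2 * q)) * (1 / sqrt (2 * q)) * (2 * q) = 1"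
  by (simp add: field_simps)

lemma sym_basis:
  fixes x y :: "complex^'n" and r :: real
  assumes xx: "cinner x x = 1" and yy: "cinner y y = 1" and xy: "cinner x y = of_real r"
    and r0: "0 \<le> r" and r1: "r \<le> 1"
  defines "f1 \<equiv> of_real (1 / sqrt (2 * (1 + r))) *s (x + y)"
    and "f2 \<equiv> of_real (1 / sqrt (2 * (1 - r))) *s (x - y)"
  shows "cinner f1 f1 = 1" "cinner f1 f2 = 0" "cinner f2 f2 *s f2 = f2"
    "cinner f2 f2 = of_real (if r = 1 then 0 else 1)"
    "cinner f1 x = of_real (sqrt ((1 + r) / 2))" "cinner f2 x = of_real (sqrt ((1 - r) / 2))"
    "cinner f1 y = of_real (sqrt ((1 + r) / 2))" "cinner f2 y = - of_real (sqrt ((1 - r) / 2))"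
    "x = of_real (sqrt ((1 + r) / 2)) *s f1 + of_real (sqrt ((1 - r) / 2)) *s f2"
    "y = of_real (sqrt ((1 + r) / 2)) *s f1 - of_real (sqrt ((1 - r) / 2)) *s f2"
proof -
  have yx: "cinner y x = of_real r" using xy by (metis cinner_cnj complex_cnj_complex_of_real)
  define a where "a = 1 / sqrt (2 * (1 + r))"
  define b where "b = 1 / sqrt (2 * (1 - r))"
  have ca: "cnj (of_real a) = (of_real a :: complex)" "cnj (of_real b) = (of_real b :: complex)" by simp_all
  have E1: "cinner (x + y) (x + y) = of_real (2 + 2 * r)"
    unfolding cinner_add cinner_add_left xx yy xy yx by simp
  have E2: "cinner (x + y) (x - y) = 0"
    unfolding cinner_diff cinner_add_left xx yy xy yx by simp
  have E3: "cinner (x - y) (x - y) = of_real (2 - 2 * r)"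
    unfolding cinner_diff cinner_diff_left xx yy xy yx by simp
  have E4: "cinner (x + y) x = of_real (1 + r)" "cinner (x - y) x = of_real (1 - r)"
     "cinner (x + y) y = of_real (1 + r)" "cinner (x - y) y = - of_real (1 - r)"
    unfolding cinner_diff_left cinner_add_left xx yy xy yx by simp_all
  have ax: "a * (1 + r) = sqrt ((1 + r) / 2)" unfolding a_def using hs1[of "1 + r"] r0 by (simp add: mult.commute)
  have bx: "b * (1 - r) = sqrt ((1 - r) / 2)" unfolding b_def using hs1[of "1 - r"] r1 by (simp add: mult.commute)
  have rr: "of_real (f * g) = (of_real f * of_real g :: complex)" for f g by simp
  have aa: "a * a * (2 + 2 * r) = 1" using hs2[of "1 + r"] r0 unfolding a_def by (simp add: algebra_simps)
  have bb: "r \<noteq> 1 \<Longrightarrow> b * b * (2 - 2 * r) = 1" using hs2[of "1 - r"] r1 unfolding b_def by (simp add: algebra_simps)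
  have b0: "r = 1 \<Longrightarrow> b = 0" unfolding b_def by simp
  show "cinner f1 f1 = 1" unfolding f1_def a_def[symmetric] cinner_scale cinner_scale_left E1 ca rr[symmetric]
    using aa by (simp add: mult.assoc)
  show "cinner f1 f2 = 0" unfolding f1_def f2_def a_def[symmetric] b_def[symmetric] cinner_scale cinner_scale_left E2
    by simp
  show f22: "cinner f2 f2 = of_real (if r = 1 then 0 else 1)"
  proof (cases "r = 1")
    case True
    then show ?thesis unfolding f2_def b_def[symmetric] cinner_scale cinner_scale_left using b0 by simp
  next
    case False
    then show ?thesis unfolding f2_def b_def[symmetric] cinner_scale cinner_scale_left E3 ca
      unfolding rr[symmetric] using bb False by (simp add: mult.assoc)
  qed
  show "cinner f2 f2 *s f2 = f2"
  proof (cases "r = 1")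
    case True
    then show ?thesis using b0 unfolding f22 by (simp add: f2_def b_def[symmetric])
  next
    case False
    then show ?thesis unfolding f22 by simp
  qed
  show "cinner f1 x = of_real (sqrt ((1 + r) / 2))" unfolding f1_def a_def[symmetric] cinner_scale_left E4 ca
    unfolding rr[symmetric] ax ..
  show "cinner f1 y = of_real (sqrt ((1 + r) / 2))" unfolding f1_def a_def[symmetric] cinner_scale_left E4 ca
    unfolding rr[symmetric] ax ..
  show "cinner f2 x = of_real (sqrt ((1 - r) / 2))" unfolding f2_def b_def[symmetric] cinner_scale_left E4 ca
    unfolding rr[symmetric] bx ..
  show "cinner f2 y = - of_real (sqrt ((1 - r) / 2))" unfolding f2_def b_def[symmetric] cinner_scale_left E4 ca
    unfolding mult_minus_right rr[symmetric] bx ..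
  have half_a: "sqrt ((1 + r) / 2) * a = 1/2"
  proof -
    have "sqrt ((1 + r) / 2) * a = (a * (1 + r)) * a" by (simp only: ax)
    also have "\<dots> = 1/2" using aa by (simp add: algebra_simps)
    finally show ?thesis .
  qed
  have half_b: "r \<noteq> 1 \<Longrightarrow> sqrt ((1 - r) / 2) * b = 1/2"
  proof -
    assume r: "r \<noteq> 1"
    have "sqrt ((1 - r) / 2) * b = (b * (1 - r)) * b" by (simp only: bx)
    also have "\<dots> = 1/2" using bb[OF r] by (simp add: algebra_simps)
    finally show ?thesis .
  qed
  show "x = of_real (sqrt ((1 + r) / 2)) *s f1 + of_real (sqrt ((1 - r) / 2)) *s f2"
  proof (cases "r = 1")
    case True
    then have xy': "x = y" using unit_eq[OF xx yy] xy by simp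
    have ah: "a = 1/2" using half_a True by simp
    show ?thesis using True unfolding f1_def f2_def a_def[symmetric] b_def[symmetric] ah xy'
      by (simp add: vec_eq_iff)
  next
    case False
    show ?thesis unfolding f1_def f2_def a_def[symmetric] b_def[symmetric]
      vector_smult_assoc rr[symmetric] half_a half_b[OF False]
      by (simp add: vec_eq_iff field_simps)
  qed
  show "y = of_real (sqrt ((1 + r) / 2)) *s f1 - of_real (sqrt ((1 - r) / 2)) *s f2"
  proof (cases "r = 1")
    case True
    then have xy': "x = y" using unit_eq[OF xx yy] xy by simp
    have ah: "a = 1/2" using half_a True by simp
    show ?thesis using True unfolding f1_def f2_def a_def[symmetric] b_def[symmetric] ah xy'
      by (simp add: vec_eq_iff)
  next
    case False
    show ?thesis unfolding f1_def f2_def a_def[symmetric] b_def[symmetric]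
      vector_smult_assoc rr[symmetric] half_a half_b[OF False]
      by (simp add: vec_eq_iff field_simps)
  qed
qed



lemma cinner_real_sym: "cinner a b = of_real r \<Longrightarrow> cinner b a = of_real r"
  by (metis cinner_cnj complex_cnj_complex_of_real)

lemma comb_norm:
  assumes "cinner h1 h1 = 1" "cinner h1 h2 = 0" "cinner h2 h2 = of_real nh"
  shows "cinner (of_real x *s h1 + of_real y *s h2) (of_real x *s h1 + of_real y *s h2) = of_real (x^2 + y^2 * nh)"
proof -
  have "cinner h2 h1 = 0" using assms(2) by (metis cinner_cnj complex_cnj_zero)
  then show ?thesis using assms
    by (simp add: cinner_add cinner_add_left cinner_scale cinner_scale_left power2_eq_square)
qed

lemma comb_inner:
  assumes "cinner q h1 = of_real A" "cinner q h2 = of_real B"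
  shows "cinner q (of_real x *s h1 + of_real y *s h2) = of_real (x * A + y * B)"
  using assms by (simp add: cinner_add cinner_scale)

lemma unit_scale_inner: "cmod u = 1 \<Longrightarrow> cinner (u *s X) (u *s X) = cinner X X"
proof -
  assume "cmod u = 1"
  then have "cnj u * u = 1" by (metis complex_norm_square mult.commute of_real_1 power_one)
  then have "u * (cnj u * cinner X X) = cinner X X" by (simp add: mult.assoc[symmetric] mult.commute[of u])
  then show ?thesis by (simp only: cinner_scale cinner_scale_left)
qed

lemma exist:
  fixes psip psim phip phim :: "complex^'n" and p :: real
  assumes u1: "cinner psip psip = 1" "cinner psim psim = 1" "cinner phip phip = 1" "cinner phim phim = 1"
    and tc: "cmod (cinner phip phim) \<le> 1 - (1 - cmod (cinner psip psim)) / p"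
    and p0: "0 < p" and p1: "p \<le> 1" and s1: "cmod (cinner psip psim) \<le> 1"
  shows "\<exists>E. quantum_operation E \<and> succ_prob E psip > 0 \<and> succ_prob E psim > 0
              \<and> pE E psip psim \<ge> p
              \<and> FE E psip psim phip phim =
                  cos ((arccos (cmod (cinner phip phim))
                        - arccos (1 - (1 - cmod (cinner psip psim)) / p)) / 2)"
proof -
  define s where "s = cmod (cinner psip psim)"
  define t where "t = cmod (cinner phip phim)"
  define c where "c = 1 - (1 - s) / p"
  have t0: "0 \<le> t" and s0: "0 \<le> s" unfolding t_def s_def by simp_all
  have tcc: "t \<le> c" using tc unfolding t_def c_def s_def .
  have c1: "c \<le> 1" unfolding c_def s_def using s1 p0 by simp
  have c0: "0 \<le> c" using t0 tcc by simp
  have t1: "t \<le> 1" using tcc c1 by simp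
  have s1': "s \<le> 1" using s1 unfolding s_def .
  obtain u w where u: "cmod u = 1" "psim = u *s w" "cinner w w = 1" "cinner psip w = of_real s"
    using phase[OF u1(2), of psip] unfolding s_def by blast
  obtain v z where v: "cmod v = 1" "phim = v *s z" "cinner z z = 1" "cinner phip z = of_real t"
    using phase[OF u1(4), of phip] unfolding t_def by blast
  define e1 where "e1 = of_real (1 / sqrt (2 * (1 + s))) *s (psip + w)"
  define e2 where "e2 = of_real (1 / sqrt (2 * (1 - s))) *s (psip - w)"
  define h1 where "h1 = of_real (1 / sqrt (2 * (1 + t))) *s (phip + z)"
  define h2 where "h2 = of_real (1 / sqrt (2 * (1 - t))) *s (phip - z)"
  note SE = sym_basis[OF u1(1) u(3) u(4) s0 s1', folded e1_def e2_def]
  note SH = sym_basis[OF u1(3) v(3) v(4) t0 t1, folded h1_def h2_def]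
  define nh where "nh = (if t = 1 then 0 else 1 :: real)"
  define th where "th = arccos c / 2"
  define a where "a = sqrt p * cos th * sqrt (2 / (1 + s))"
  define b where "b = sqrt p * sin th * sqrt (2 / (1 - s))"
  define K where "K = outer (of_real a *s h1) e1 + outer (of_real b *s h2) e2"
  define K3 where "K3 = (mat 1 - outer e1 e1 - outer e2 e2 :: complex^'n^'n)"
  define E where "E = kraus_map [K, K3]"
  have cth: "cos th = sqrt ((1 + c) / 2)" unfolding th_def using c0 c1 by (intro cos_half_arccos) auto
  have sth: "sin th = sqrt ((1 - c) / 2)" unfolding th_def using c0 c1 by (intro sin_half_arccos) auto
  have a1: "a^2 \<le> 1"
  proof -
    have num: "p * (1 + c) = 2 * p - 1 + s" unfolding c_def using p0 by (simp add: field_simps)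
    have "a^2 = p * ((1 + c) / 2) * (2 / (1 + s))" unfolding a_def cth using p0 c0 s0
      by (simp add: power_mult_distrib)
    also have "\<dots> = (p * (1 + c)) / (1 + s)" by simp
    also have "\<dots> = (2 * p - 1 + s) / (1 + s)" unfolding num ..
    also have "\<dots> \<le> 1" using p1 s0 by (simp add: field_simps)
    finally show ?thesis .
  qed
  have b1: "b^2 \<le> 1"
  proof (cases "s = 1")
    case True then show ?thesis unfolding b_def by simp
  next
    case False
    then have sl: "s < 1" using s1' by simp
    have "b^2 = p * ((1 - c) / 2) * (2 / (1 - s))" unfolding b_def sth using p0 c1 sl
      by (simp add: power_mult_distrib)
    also have "\<dots> = 1" unfolding c_def using p0 sl by (simp add: field_simps)
    finally show ?thesis by simp
  qed
  have QO: "quantum_operation E" unfolding E_def K_def K3_def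
    by (rule qo_construct[OF SE(1) SE(2) SE(3) SH(1) SH(2) SH(4)])
      (use a1 b1 in auto)
  define ct where "ct = sqrt p * cos th"
  define st where "st = sqrt p * sin th"
  have c_one: "c = 1" if h: "s = 1 \<or> t = 1"
    using h
  proof
    assume "s = 1" then show ?thesis unfolding c_def by simp
  next
    assume "t = 1" then show ?thesis using c1 tcc by simp
  qed
  have st0: "c = 1 \<Longrightarrow> st = 0" unfolding st_def th_def by simp
  have ka: "sqrt ((1 + s) / 2) * a = ct"
  proof -
    have "sqrt ((1 + s) / 2) * sqrt (2 / (1 + s)) = 1" using s0
      by (simp flip: real_sqrt_mult)
    then show ?thesis unfolding a_def ct_def by (metis mult.commute mult.left_commute mult.right_neutral)
  qed
  have kb: "sqrt ((1 - s) / 2) * b = st"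
  proof (cases "s = 1")
    case True then show ?thesis using st0 c_one by simp
  next
    case False
    then have "sqrt ((1 - s) / 2) * sqrt (2 / (1 - s)) = 1" using s1'
      by (simp flip: real_sqrt_mult)
    then show ?thesis unfolding b_def st_def by (metis mult.commute mult.left_commute mult.right_neutral)
  qed
  have rr: "of_real (f * g) = (of_real f * of_real g :: complex)" for f g by simp
  have Kpsip: "K *v psip = of_real ct *s h1 + of_real st *s h2"
    unfolding K_def matrix_vector_mult_add_rdistrib outer_mult_vec SE(5) SE(6) vector_smult_assoc rr[symmetric] ka kb ..
  have Kw: "K *v w = of_real ct *s h1 + of_real (- st) *s h2"
    unfolding K_def matrix_vector_mult_add_rdistrib outer_mult_vec SE(7) SE(8) vector_smult_assoc
    by (simp flip: rr add: ka kb)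
  have K3psip: "K3 *v psip = 0"
  proof -
    have "K3 *v psip = psip - (of_real (sqrt ((1 + s) / 2)) *s e1 + of_real (sqrt ((1 - s) / 2)) *s e2)"
      unfolding K3_def matrix_vector_mult_diff_rdistrib outer_mult_vec SE(5) SE(6) by simp
    also have "\<dots> = 0" using SE(9) by simp
    finally show ?thesis .
  qed
  have K3w: "K3 *v w = 0"
  proof -
    have "K3 *v w = w - (of_real (sqrt ((1 + s) / 2)) *s e1 - of_real (sqrt ((1 - s) / 2)) *s e2)"
      unfolding K3_def matrix_vector_mult_diff_rdistrib outer_mult_vec SE(7) SE(8) by (simp add: algebra_simps)
    also have "\<dots> = 0" using SE(10) by simp
    finally show ?thesis .
  qed
  have Kpsim: "K *v psim = u *s (K *v w)" unfolding u(2) mat_vec_scale ..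
  have K3psim: "K3 *v psim = 0" unfolding u(2) mat_vec_scale K3w by simp
  have h22: "cinner h2 h2 = of_real nh" unfolding nh_def SH(4) ..
  have nrm: "ct^2 + st^2 * nh = p"
  proof -
    have "ct^2 + st^2 = p" unfolding ct_def st_def using p0
      by (simp add: power_mult_distrib flip: distrib_left)
    moreover have "st^2 * nh = st^2" unfolding nh_def using st0 c_one by auto
    ultimately show ?thesis by (cases "st = 0") auto
  qed
  have NP: "cinner (K *v psip) (K *v psip) = of_real p"
    unfolding Kpsip comb_norm[OF SH(1) SH(2) h22] nrm ..
  have NW: "cinner (K *v w) (K *v w) = of_real p"
    unfolding Kw comb_norm[OF SH(1) SH(2) h22] using nrm by simp
  have NM: "cinner (K *v psim) (K *v psim) = of_real p"
    unfolding Kpsim unit_scale_inner[OF u(1)] NW ..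
  define Fs where "Fs = cos ((arccos t - arccos c) / 2)"
  have Fs_eq: "ct * sqrt ((1 + t) / 2) + st * sqrt ((1 - t) / 2) = sqrt p * Fs"
  proof -
    have "Fs = cos (arccos t / 2 - th)" unfolding Fs_def th_def by (simp add: diff_divide_distrib)
    also have "\<dots> = sqrt ((1 + t) / 2) * cos th + sqrt ((1 - t) / 2) * sin th"
      unfolding cos_diff using t0 t1 by (simp add: cos_half_arccos sin_half_arccos)
    finally show ?thesis unfolding ct_def st_def by (simp add: algebra_simps)
  qed
  have Fs0: "0 \<le> Fs"
  proof -
    have "arccos c \<le> arccos t" using t0 tcc c1 by (intro arccos_le_arccos) auto
    moreover have "arccos t \<le> pi/2" using t0 tcc c1 by (intro arccos_le_pi2) auto
    moreover have "0 \<le> arccos c" using t0 tcc c1 by (intro arccos_lbound) auto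
    ultimately show ?thesis unfolding Fs_def by (intro cos_ge_zero) auto
  qed
  have IP: "cinner phip (K *v psip) = of_real (sqrt p * Fs)"
    unfolding Kpsip Fs_eq[symmetric]
    by (rule comb_inner) (rule cinner_real_sym, fact SH(5), rule cinner_real_sym, fact SH(6))
  have IW: "cinner z (K *v w) = of_real (sqrt p * Fs)"
  proof -
    have "cinner z (K *v w) = of_real (ct * sqrt ((1 + t) / 2) + (- st) * (- sqrt ((1 - t) / 2)))"
      unfolding Kw
      by (rule comb_inner) (rule cinner_real_sym, fact SH(7), rule cinner_real_sym, simp add: SH(8))
    then show ?thesis using Fs_eq by simp
  qed
  have IM: "cmod (cinner phim (K *v psim)) = sqrt p * Fs"
  proof -
    have "cinner phim (K *v psim) = cnj v * u * cinner z (K *v w)"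
      unfolding Kpsim v(2) cinner_scale cinner_scale_left by simp
    then show ?thesis using u(1) v(1) IW Fs0 p0 by (simp add: norm_mult)
  qed
  have SP: "succ_prob E psip = p" unfolding succ_prob_def E_def trace_kraus_proj using NP K3psip by simp
  have SM: "succ_prob E psim = p" unfolding succ_prob_def E_def trace_kraus_proj using NM K3psim by simp
  have FP: "pure_fid phip (out_state E psip) = Fs"
    unfolding pure_fid_def E_def fid_formula SP[unfolded E_def] using IP K3psip Fs0 p0
    by (simp add: lessThan_Suc power_mult_distrib norm_mult)
  have FM: "pure_fid phim (out_state E psim) = Fs"
    unfolding pure_fid_def E_def fid_formula SM[unfolded E_def] using IM K3psim Fs0 p0
    by (simp add: lessThan_Suc power_mult_distrib norm_mult)
  show ?thesis
  proof (intro exI conjI)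
    show "quantum_operation E" by (rule QO)
    show "0 < succ_prob E psip" "0 < succ_prob E psim" "p \<le> pE E psip psim"
      using SP SM p0 by (simp_all add: pE_def)
    show "FE E psip psim phip phim = cos ((arccos (cmod (cinner phip phim)) - arccos (1 - (1 - cmod (cinner psip psim)) / p)) / 2)"
      unfolding FE_def FP FM Fs_def t_def c_def s_def by simp
  qed
qed



lemma norm_cinner: "norm (x::complex^'n) = 1 \<Longrightarrow> cinner x x = 1"
proof -
  assume "norm x = 1"
  then have "sqrt (\<Sum>i\<in>UNIV. (cmod (x $ i))^2) = 1" by (simp add: norm_vec_def L2_set_def)
  then have "(\<Sum>i\<in>UNIV. (cmod (x $ i))^2) = 1" by simp
  then show ?thesis unfolding cinner_ip ip_self by simp
qed

lemma cinner_le1: "cinner x x = 1 \<Longrightarrow> cinner y y = 1 \<Longrightarrow> cmod (cinner x y) \<le> 1"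
  unfolding cinner_ip by (rule ip_unit_le1)

theorem mainTheorem2:
  fixes psip psim phip phim :: "complex^'n"
    and p :: real
  assumes "norm psip = 1" and "norm psim = 1" and "norm phip = 1" and "norm phim = 1"
    and "cmod (cinner phip phim) \<le> cmod (cinner psip psim)"
    and "(1 - cmod (cinner psip psim)) / (1 - cmod (cinner phip phim)) \<le> p"
    and "p \<le> 1" and "0 < p"
  shows "(\<exists>E. quantum_operation E \<and> succ_prob E psip > 0 \<and> succ_prob E psim > 0
              \<and> pE E psip psim \<ge> p
              \<and> FE E psip psim phip phim =
                  cos ((arccos (cmod (cinner phip phim))
                        - arccos (1 - (1 - cmod (cinner psip psim)) / p)) / 2))
       \<and> (\<forall>E. quantum_operation E \<and> succ_prob E psip > 0 \<and> succ_prob E psim > 0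
              \<and> pE E psip psim \<ge> p
              \<longrightarrow> FE E psip psim phip phim \<le>
                  cos ((arccos (cmod (cinner phip phim))
                        - arccos (1 - (1 - cmod (cinner psip psim)) / p)) / 2))"
proof -
  have u1: "cinner psip psip = 1" "cinner psim psim = 1" "cinner phip phip = 1" "cinner phim phim = 1"
    using assms(1-4) by (simp_all add: norm_cinner)
  define s where "s = cmod (cinner psip psim)"
  define t where "t = cmod (cinner phip phim)"
  have s1: "s \<le> 1" unfolding s_def using cinner_le1[OF u1(1) u1(2)] .
  have t1: "t \<le> 1" unfolding t_def using cinner_le1[OF u1(3) u1(4)] .
  have ts: "t \<le> s" using assms(5) unfolding s_def t_def .
  have p0: "0 < p" by fact
  have tc: "t \<le> 1 - (1 - s) / p"
  proof (cases "t = 1")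
    case True
    then have "s = 1" using ts s1 by simp
    then show ?thesis using True by simp
  next
    case False
    then have tl: "0 < 1 - t" using t1 by simp
    have "(1 - s) / (1 - t) \<le> p" using assms(6) unfolding s_def t_def .
    then have "1 - s \<le> p * (1 - t)" using tl by (simp add: divide_le_eq)
    then have "(1 - s) / p \<le> 1 - t" using p0 by (simp add: divide_le_eq mult.commute)
    then show ?thesis by simp
  qed
  show ?thesis
  proof
    show "\<exists>E. quantum_operation E \<and> succ_prob E psip > 0 \<and> succ_prob E psim > 0
              \<and> pE E psip psim \<ge> p
              \<and> FE E psip psim phip phim =
                  cos ((arccos (cmod (cinner phip phim))
                        - arccos (1 - (1 - cmod (cinner psip psim)) / p)) / 2)"
      by (rule exist[OF u1 tc[unfolded s_def t_def] p0 assms(7) s1[unfolded s_def]])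
  next
    show "\<forall>E. quantum_operation E \<and> succ_prob E psip > 0 \<and> succ_prob E psim > 0
              \<and> pE E psip psim \<ge> p
              \<longrightarrow> FE E psip psim phip phim \<le>
                  cos ((arccos (cmod (cinner phip phim))
                        - arccos (1 - (1 - cmod (cinner psip psim)) / p)) / 2)"
    proof (intro allI impI)
      fix E :: "complex^'n^'n \<Rightarrow> complex^'n^'n"
      assume h: "quantum_operation E \<and> succ_prob E psip > 0 \<and> succ_prob E psim > 0 \<and> pE E psip psim \<ge> p"
      have qE: "quantum_operation E" using h by simp
      then obtain Ks where Ks: "E = kraus_map Ks" unfolding quantum_operation_def by auto
      have tr: "\<forall>\<rho>. psd \<rho> \<longrightarrow> Re (trace (E \<rho>)) \<le> Re (trace \<rho>)"
        using qE unfolding quantum_operation_def by simp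
      have qo: "\<forall>v. Re (trace (kraus_map Ks (proj v))) \<le> Re (cinner v v)"
      proof
        fix v :: "complex^'n"
        have "Re (trace (E (proj v))) \<le> Re (trace (proj v))" using tr psd_proj[of v] by blast
        then show "Re (trace (kraus_map Ks (proj v))) \<le> Re (cinner v v)" unfolding Ks trace_proj .
      qed
      have pp: "p \<le> succ_prob (kraus_map Ks) psip" "p \<le> succ_prob (kraus_map Ks) psim"
        using h unfolding Ks pE_def by simp_all
      show "FE E psip psim phip phim \<le>
                  cos ((arccos (cmod (cinner phip phim))
                        - arccos (1 - (1 - cmod (cinner psip psim)) / p)) / 2)"
        unfolding Ks by (rule upper[OF u1 qo pp p0 tc[unfolded s_def t_def] s1[unfolded s_def]])
    qed
  qed
qed

end
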